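(* Let $T$ be an admissible LCA-tree with $n$ leaves and let $z$ be a positive integer. Define sets of leaves $\mathbf{C}_0=\emptyset$ and, for $i=1,\dots,n$, $\mathbf{C}_i=\mathbf{C}_{i-1}\cup\{c_i\}$, where $c_i$ is any leaf not in $\mathbf{C}_{i-1}$ that maximizes the cost-decrease $\mathrm{Cost}_z(T,\mathbf{C}_{i-1})-\mathrm{Cost}_z(T,\mathbf{C}_{i-1}\cup\{c_i\})$ (equivalently, minimizes $\mathrm{Cost}_z(T,\mathbf{C}_{i-1}\cup\{c_i\})$; with the convention $\mathrm{Cost}_z(T,\emptyset)=+\infty$). Then for every $k\in\{1,\dots,n\}$, $\mathbf{C}_k$ minimizes $\mathrm{Cost}_z(T,\mathbf{C})$ over all sets $\mathbf{C}$ of $k$ distinct leaves of $T$.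
   Context: An LCA-tree is a finite rooted tree $T$ in which every node $\eta$ (leaves included) carries a real value $d(\eta)$; for leaves $\ell_i,\ell_j$, $d(\ell_i,\ell_j)=d(\ell_i\lor\ell_j)$, where $\ell_i\lor\ell_j$ is their lowest common ancestor ($\ell\lor\ell=\ell$). It is admissible if $d(\eta)\ge0$ for all nodes and $d(\eta)\le d(\mathrm{parent}(\eta))$ for every non-root node. For a set $\mathbf{C}$ of leaves, $\mathrm{Cost}_z(T,\mathbf{C})=\sum_{\ell\text{ leaf of }T}\min_{c\in\mathbf{C}} d(\ell,c)^z$. *)

theory Defs
  imports Complex_Main
begin

text \<open>An LCA-tree: a finite rooted (ordered) tree whose every node carries a real value.
  Nodes are identified by their positions (paths of child indices from the root).\<close>
datatype ltree = Nd real "ltree list"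

fun val :: "ltree \<Rightarrow> real" where
  "val (Nd v _) = v"

fun subtree_at :: "ltree \<Rightarrow> nat list \<Rightarrow> ltree option" where
  "subtree_at t [] = Some t"
| "subtree_at (Nd v cs) (i # p) = (if i < length cs then subtree_at (cs ! i) p else None)"

definition leaves :: "ltree \<Rightarrow> nat list set" where
  "leaves t = {p. \<exists>v. subtree_at t p = Some (Nd v [])}"

definition dval :: "ltree \<Rightarrow> nat list \<Rightarrow> real" where
  "dval t p = (case subtree_at t p of Some s \<Rightarrow> val s | None \<Rightarrow> 0)"

text \<open>Lowest common ancestor of two positions = longest common prefix.\<close>
fun lcp :: "nat list \<Rightarrow> nat list \<Rightarrow> nat list" where
  "lcp (x # xs) (y # ys) = (if x = y then x # lcp xs ys else [])"
| "lcp _ _ = []"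

definition dist_lca :: "ltree \<Rightarrow> nat list \<Rightarrow> nat list \<Rightarrow> real" where
  "dist_lca t l1 l2 = dval t (lcp l1 l2)"

fun admissible :: "ltree \<Rightarrow> bool" where
  "admissible (Nd v cs) = (0 \<le> v \<and> (\<forall>c\<in>set cs. val c \<le> v \<and> admissible c))"

text \<open>Cost_z(T,C) for a nonempty set C of leaves.\<close>
definition cost :: "nat \<Rightarrow> ltree \<Rightarrow> nat list set \<Rightarrow> real" where
  "cost z t C = (\<Sum>l\<in>leaves t. Min ((\<lambda>c. dist_lca t l c ^ z) ` C))"

end

theory Submission imports Defs "HOL-Library.Sublist" begin

definition Pf :: "nat list \<Rightarrow> nat list set" where "Pf x = {u. prefix u x}"
definition Nf :: "nat list set \<Rightarrow> nat list set" where "Nf S = {u. \<exists>c\<in>S. prefix u c}"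
definition Ff :: "(nat list \<Rightarrow> real) \<Rightarrow> nat list set \<Rightarrow> real" where "Ff v S = sum v (Nf S)"
definition Dl :: "(nat list \<Rightarrow> real) \<Rightarrow> nat list \<Rightarrow> nat list set \<Rightarrow> real" where
  "Dl v x S = sum v (Pf x - Nf S)"

lemma finite_Pf[simp]: "finite (Pf x)"
proof -
  have "Pf x = set (prefixes x)" by (auto simp: Pf_def)
  then show ?thesis by simp
qed

lemma Nf_UN: "Nf S = (\<Union>c\<in>S. Pf c)" by (auto simp: Nf_def Pf_def)

lemma finite_Nf[simp]: "finite S \<Longrightarrow> finite (Nf S)" by (simp add: Nf_UN)

lemma Nf_insert: "Nf (insert x S) = Pf x \<union> Nf S" by (auto simp: Nf_def Pf_def)

lemma Nf_mono: "S \<subseteq> T \<Longrightarrow> Nf S \<subseteq> Nf T" by (auto simp: Nf_def)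

lemma Ff_insert: "finite S \<Longrightarrow> Ff v (insert x S) = Ff v S + Dl v x S"
proof -
  assume "finite S"
  have "Nf (insert x S) = Nf S \<union> (Pf x - Nf S)" by (auto simp: Nf_insert)
  then have "Ff v (insert x S) = sum v (Nf S \<union> (Pf x - Nf S))" by (simp add: Ff_def)
  also have "\<dots> = sum v (Nf S) + sum v (Pf x - Nf S)"
    by (rule sum.union_disjoint) (auto simp: \<open>finite S\<close>)
  finally show ?thesis by (simp add: Ff_def Dl_def)
qed

lemma Dl_anti:
  assumes "\<forall>u. prefix u x \<longrightarrow> 0 \<le> v u" "S \<subseteq> T"
  shows "Dl v x T \<le> Dl v x S"
  unfolding Dl_def
  apply (rule sum_mono2)
  subgoal by simp
  subgoal using Nf_mono[OF assms(2)] by blast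
  subgoal using assms(1) by (auto simp: Pf_def)
  done

lemma exchange:
  assumes fin: "finite Ob" and GO: "G \<subseteq> Ob" and gO: "g \<notin> Ob" and ne: "Ob - G \<noteq> {}"
    and OL: "Ob \<subseteq> L" and gL: "g \<in> L"
    and vpos: "\<forall>x\<in>L. \<forall>u. prefix u x \<longrightarrow> 0 \<le> v u"
    and gr: "\<forall>x\<in>L - G. Ff v (insert x G) \<le> Ff v (insert g G)"
  shows "\<exists>oo\<in>Ob - G. Ff v Ob \<le> Ff v (insert g (Ob - {oo}))"
proof -
  have finG: "finite G" using fin GO finite_subset by blast
  have grD: "Dl v x G \<le> Dl v g G" if "x \<in> L - G" for x
    using gr that Ff_insert[OF finG] by fastforce
  define M where "M = {i. i \<le> length g \<and> take i g \<in> Nf Ob}"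
  obtain oo0 where "oo0 \<in> Ob" using ne by blast
  have "0 \<in> M" unfolding M_def Nf_def using \<open>oo0 \<in> Ob\<close> by auto
  have finM: "finite M" unfolding M_def by auto
  define m where "m = Max M"
  have "m \<in> M" unfolding m_def using finM \<open>0 \<in> M\<close> Max_in by blast
  define u where "u = take m g"
  have uN: "u \<in> Nf Ob" using \<open>m \<in> M\<close> unfolding M_def u_def by auto
  have ug: "prefix u g" unfolding u_def by (simp add: take_is_prefix)
  have PgN: "Pf g \<inter> Nf Ob = Pf u"
  proof
    show "Pf g \<inter> Nf Ob \<subseteq> Pf u"
    proof
      fix w assume w: "w \<in> Pf g \<inter> Nf Ob"
      then have wg: "prefix w g" by (simp add: Pf_def)
      then have "w = take (length w) g" by (metis append_eq_conv_conj prefix_def)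
      then have "length w \<in> M" using w wg unfolding M_def by (auto simp: prefix_length_le)
      then have "length w \<le> m" unfolding m_def using finM by simp
      have "prefix w u" unfolding u_def using \<open>w = take (length w) g\<close> \<open>length w \<le> m\<close>
        by (metis min.absorb1 take_is_prefix take_take)
      then show "w \<in> Pf u" by (simp add: Pf_def)
    qed
  next
    show "Pf u \<subseteq> Pf g \<inter> Nf Ob"
      using uN ug by (auto simp: Pf_def Nf_def intro: prefix_order.trans)
  qed
  show ?thesis
  proof (cases "u \<in> Nf G")
    case True
    obtain oo where oo: "oo \<in> Ob - G" using ne by blast
    define Q where "Q = Ob - {oo}"
    have finO': "finite Q" using fin Q_def by auto
    have GO': "G \<subseteq> Q" using GO oo Q_def by auto
    have Oins: "Ob = insert oo Q" using oo Q_def by auto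
    have oL: "oo \<in> L" using oo OL by auto
    have "Pf u \<subseteq> Nf G" using True by (auto simp: Pf_def Nf_def intro: prefix_order.trans)
    then have "Pf g - Nf G \<subseteq> Pf g - Nf Ob" using PgN by auto
    then have "Dl v g G \<le> Dl v g Ob" unfolding Dl_def
      apply (intro sum_mono2) using vpos gL by (simp, blast, auto simp: Pf_def)
    moreover have "Dl v g Ob \<le> Dl v g Q"
      using Dl_anti vpos gL Q_def by blast
    moreover have "Dl v oo Q \<le> Dl v oo G" using Dl_anti vpos oL GO' by blast
    moreover have "Dl v oo G \<le> Dl v g G" using grD oo oL by auto
    ultimately have "Dl v oo Q \<le> Dl v g Q" by linarith
    then have "Ff v Ob \<le> Ff v (insert g Q)"
      using Ff_insert[OF finO'] Oins by simp
    then show ?thesis using oo Q_def by auto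
  next
    case False
    obtain oo where oo: "oo \<in> Ob" "prefix u oo" using uN by (auto simp: Nf_def)
    have oG: "oo \<notin> G" using False oo by (auto simp: Nf_def)
    define Q where "Q = Ob - {oo}"
    define A where "A = Pf u"
    have finO': "finite Q" using fin Q_def by auto
    have GO': "G \<subseteq> Q" using GO oG Q_def by auto
    have Oins: "Ob = insert oo Q" using oo Q_def by auto
    have oL: "oo \<in> L" using oo OL by auto
    have Ao: "A \<subseteq> Pf oo" unfolding A_def using oo by (auto simp: Pf_def intro: prefix_order.trans)
    have Ag: "A \<subseteq> Pf g" unfolding A_def using ug by (auto simp: Pf_def intro: prefix_order.trans)
    have vo: "\<forall>w\<in>Pf oo. 0 \<le> v w" using vpos oL by (auto simp: Pf_def)
    have vg: "\<forall>w\<in>Pf g. 0 \<le> v w" using vpos gL by (auto simp: Pf_def)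
    have split: "Dl v x S = sum v (A - Nf S) + sum v ((Pf x - Nf S) - A)"
      if "A \<subseteq> Pf x" for x S
    proof -
      have "Pf x - Nf S = (A - Nf S) \<union> ((Pf x - Nf S) - A)" using that by auto
      then have "Dl v x S = sum v ((A - Nf S) \<union> ((Pf x - Nf S) - A))" by (simp add: Dl_def)
      also have "\<dots> = sum v (A - Nf S) + sum v ((Pf x - Nf S) - A)"
        apply (rule sum.union_disjoint)
        using finite_subset[OF that finite_Pf] by auto
      finally show ?thesis .
    qed
    have gA: "(Pf g - Nf S) - A = Pf g - A" if "Nf S \<subseteq> Nf Ob" for S
      using PgN that unfolding A_def by auto
    have "Dl v oo G \<le> Dl v g G" using grD oG oL by auto
    then have "sum v ((Pf oo - Nf G) - A) \<le> sum v (Pf g - A)"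
      using split[OF Ao, of G] split[OF Ag, of G] gA[of G] Nf_mono[OF GO] by simp
    moreover have "sum v ((Pf oo - Nf Q) - A) \<le> sum v ((Pf oo - Nf G) - A)"
      apply (rule sum_mono2) using Nf_mono[OF GO'] vo by auto
    ultimately have "sum v ((Pf oo - Nf Q) - A) \<le> sum v ((Pf g - Nf Q) - A)"
      using gA[of Q] Nf_mono[of Q Ob] Q_def by auto
    then have "Dl v oo Q \<le> Dl v g Q"
      using split[OF Ao, of Q] split[OF Ag, of Q] by simp
    then have "Ff v Ob \<le> Ff v (insert g Q)"
      using Ff_insert[OF finO'] Oins by simp
    then show ?thesis using oo oG Q_def by auto
  qed
qed

lemma inj_greedy:
  fixes c :: "nat \<Rightarrow> nat list" and n :: nat
  assumes "\<forall>i\<in>{1..n}. c i \<notin> c ` {1..<i}"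
  shows "inj_on c {1..n}"
proof (rule inj_onI)
  fix i j assume ij: "i \<in> {1..n}" "j \<in> {1..n}" "c i = c j"
  have a: "\<not> i < j"
  proof
    assume "i < j"
    then have "i \<in> {1..<j}" using ij by simp
    then have "c j \<in> c ` {1..<j}" using ij(3) by (metis image_eqI)
    then show False using assms ij(2) by blast
  qed
  have b: "\<not> j < i"
  proof
    assume "j < i"
    then have "j \<in> {1..<i}" using ij by simp
    then have "c i \<in> c ` {1..<i}" using ij(3) by (metis image_eqI)
    then show False using assms ij(1) by blast
  qed
  from a b show "i = j" by simp
qed

lemma greedy_opt:
  fixes c :: "nat \<Rightarrow> nat list" and n k :: nat
  assumes vpos: "\<forall>x\<in>L. \<forall>u. prefix u x \<longrightarrow> 0 \<le> v u"
    and gr: "\<forall>i\<in>{1..n}. c i \<in> L \<and> c i \<notin> c ` {1..<i} \<and>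
        (\<forall>x\<in>L - c ` {1..<i}. Ff v (insert x (c ` {1..<i})) \<le> Ff v (insert (c i) (c ` {1..<i})))"
    and kn: "k \<le> n" and k1: "1 \<le> k" and CL: "C \<subseteq> L" and cC: "card C = k"
  shows "Ff v C \<le> Ff v (c ` {1..k})"
proof -
  have inj: "inj_on c {1..n}" using inj_greedy gr by blast
  have cardj: "card (c ` {1..j}) = j" if "j \<le> n" for j
  proof -
    have "inj_on c {1..j}" using inj that by (auto intro: inj_on_subset)
    then show ?thesis by (simp add: card_image)
  qed
  have claim: "j \<le> k \<Longrightarrow> \<exists>C'. C' \<subseteq> L \<and> card C' = k \<and> c ` {1..j} \<subseteq> C' \<and> Ff v C \<le> Ff v C'" for j
  proof (induction j)
    case 0
    then show ?case using CL cC by auto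
  next
    case (Suc j)
    then obtain C'' where C'': "C'' \<subseteq> L" "card C'' = k" "c ` {1..j} \<subseteq> C''" "Ff v C \<le> Ff v C''"
      by auto
    have finC'': "finite C''" using C''(2) k1 card_ge_0_finite[of C''] by linarith
    have i: "Suc j \<in> {1..n}" using Suc.prems kn by auto
    have G: "c ` {1..<Suc j} = c ` {1..j}" by (simp add: atLeastLessThanSuc_atLeastAtMost)
    have ins: "c ` {1..Suc j} = insert (c (Suc j)) (c ` {1..j})"
      by (simp add: atLeastAtMostSuc_conv)
    show ?case
    proof (cases "c (Suc j) \<in> C''")
      case True
      then show ?thesis using C'' ins by auto
    next
      case False
      have cj: "card (c ` {1..j}) = j" using cardj Suc.prems kn by auto
      have "C'' - c ` {1..j} \<noteq> {}"
      proof
        assume "C'' - c ` {1..j} = {}"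
        then have "C'' \<subseteq> c ` {1..j}" by blast
        then have "card C'' \<le> card (c ` {1..j})" by (intro card_mono) auto
        then show False using C''(2) cj Suc.prems by simp
      qed
      moreover have "c (Suc j) \<in> L" using gr i by blast
      moreover have "\<forall>x\<in>L - c ` {1..<Suc j}. Ff v (insert x (c ` {1..<Suc j})) \<le> Ff v (insert (c (Suc j)) (c ` {1..<Suc j}))"
        using gr i by blast
      then have "\<forall>x\<in>L - c ` {1..j}. Ff v (insert x (c ` {1..j})) \<le> Ff v (insert (c (Suc j)) (c ` {1..j}))"
        by (simp only: G)
      ultimately obtain oo where oo: "oo \<in> C'' - c ` {1..j}"
        "Ff v C'' \<le> Ff v (insert (c (Suc j)) (C'' - {oo}))"
        using exchange[OF finC'' C''(3) False _ C''(1) _ vpos] by blast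
      define C' where "C' = insert (c (Suc j)) (C'' - {oo})"
      have "card C' = k" unfolding C'_def using False finC'' oo(1) C''(2) k1
        by (simp add: card_insert_if card_Diff_singleton)
      moreover have "C' \<subseteq> L" unfolding C'_def using C''(1) gr i by auto
      moreover have "c ` {1..Suc j} \<subseteq> C'" unfolding C'_def ins using C''(3) oo(1) by auto
      moreover have "Ff v C \<le> Ff v C'" using oo(2) C''(4) unfolding C'_def by linarith
      ultimately show ?thesis by blast
    qed
  qed
  obtain C' where C': "C' \<subseteq> L" "card C' = k" "c ` {1..k} \<subseteq> C'" "Ff v C \<le> Ff v C'"
    using claim[of k] by auto
  have "finite C'" using C'(2) k1 card_ge_0_finite[of C'] by linarith
  then have "c ` {1..k} = C'" using card_subset_eq[OF \<open>finite C'\<close> C'(3)] C'(2) cardj[OF kn] by simp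
  then have "C' = c ` {1..k}" by simp
  then show ?thesis using C'(4) by simp
qed

lemma subtree_app:
  "subtree_at t (p @ r) = Some s \<Longrightarrow> \<exists>s'. subtree_at t p = Some s' \<and> subtree_at s' r = Some s"
proof (induction p arbitrary: t)
  case Nil then show ?case by simp
next
  case (Cons i p)
  obtain v cs where t: "t = Nd v cs" by (cases t)
  show ?case using Cons.prems Cons.IH unfolding t by (auto split: if_splits)
qed

lemma adm_sub: "admissible t \<Longrightarrow> subtree_at t r = Some s \<Longrightarrow> admissible s \<and> val s \<le> val t"
proof (induction r arbitrary: t)
  case Nil then show ?case by simp
next
  case (Cons i r)
  obtain v cs where t: "t = Nd v cs" by (cases t)
  have i: "i < length cs" and s: "subtree_at (cs ! i) r = Some s"
    using Cons.prems unfolding t by (auto split: if_splits)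
  have "cs ! i \<in> set cs" using i by simp
  then have "admissible (cs ! i)" "val (cs ! i) \<le> v" using Cons.prems(1) unfolding t by auto
  then show ?case using Cons.IH[OF _ s] unfolding t by fastforce
qed

lemma adm_nonneg: "admissible t \<Longrightarrow> 0 \<le> val t" by (cases t) auto

lemma finite_nodes: "finite {p. subtree_at t p \<noteq> None}"
proof (induction t)
  case (Nd v cs)
  have "{p. subtree_at (Nd v cs) p \<noteq> None} \<subseteq>
        insert [] (\<Union>i<length cs. (Cons i) ` {p. subtree_at (cs ! i) p \<noteq> None})"
  proof
    fix p assume "p \<in> {p. subtree_at (Nd v cs) p \<noteq> None}"
    then show "p \<in> insert [] (\<Union>i<length cs. (Cons i) ` {p. subtree_at (cs ! i) p \<noteq> None})"
      by (cases p) (auto split: if_splits)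
  qed
  moreover have "finite (insert [] (\<Union>i<length cs. (Cons i) ` {p. subtree_at (cs ! i) p \<noteq> None}))"
    using Nd.IH by auto
  ultimately show ?case using finite_subset by blast
qed

lemma finite_leaves: "finite (leaves t)"
proof -
  have "leaves t \<subseteq> {p. subtree_at t p \<noteq> None}" by (auto simp: leaves_def)
  then show ?thesis using finite_nodes finite_subset by blast
qed

lemma lcp_prefix: "prefix u (lcp a b) \<longleftrightarrow> prefix u a \<and> prefix u b"
proof (induction a b arbitrary: u rule: lcp.induct)
  case (1 x xs y ys)
  then show ?case by (cases u) auto
qed auto

lemma W_anti:
  assumes adm: "admissible t" and l: "l \<in> leaves t" and pq: "prefix p q" and ql: "prefix q l"
  shows "dval t q ^ z \<le> dval t p ^ z \<and> 0 \<le> dval t q"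
proof -
  obtain v0 where lv: "subtree_at t l = Some (Nd v0 [])" using l by (auto simp: leaves_def)
  obtain r where "l = q @ r" using ql by (auto elim: prefixE)
  then obtain sq where sq: "subtree_at t q = Some sq" using subtree_app lv by blast
  obtain r1 where "q = p @ r1" using pq by (auto elim: prefixE)
  then obtain sp where sp: "subtree_at t p = Some sp" "subtree_at sp r1 = Some sq"
    using subtree_app sq by blast
  have "admissible sp" using adm_sub[OF adm sp(1)] by simp
  then have "val sq \<le> val sp" "admissible sq" using adm_sub[OF _ sp(2)] by auto
  moreover have "0 \<le> val sq" using adm_nonneg[OF \<open>admissible sq\<close>] .
  ultimately show ?thesis using sq sp(1) by (simp add: dval_def power_mono)
qed

lemma telescope:
  fixes W :: "nat list \<Rightarrow> real"
  shows "(\<Sum>u\<in>{u. prefix u p} - {[]}. W (butlast u) - W u) = W [] - W p"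
proof (induction p rule: rev_induct)
  case Nil
  have "{u. prefix u []} - {[]} = {}" by auto
  then show ?case by simp
next
  case (snoc x xs)
  have eq: "{u. prefix u (xs @ [x])} - {[]} = insert (xs @ [x]) ({u. prefix u xs} - {[]})" by auto
  have nm: "xs @ [x] \<notin> {u. prefix u xs} - {[]}" using prefix_length_le by fastforce
  have fin: "finite ({u. prefix u xs} - {[]})" using finite_Pf[of xs] by (simp add: Pf_def)
  show ?case unfolding eq sum.insert[OF fin nm] snoc.IH by simp
qed

lemma leaf_min:
  assumes adm: "admissible t" and l: "l \<in> leaves t" and fin: "finite C" and ne: "C \<noteq> {}"
  shows "Min ((\<lambda>c. dist_lca t l c ^ z) ` C) =
    dval t [] ^ z - (\<Sum>u\<in>{u\<in>Nf C. u \<noteq> [] \<and> prefix u l}. dval t (butlast u) ^ z - dval t u ^ z)"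
proof -
  define m where "m = Max ((\<lambda>c. length (lcp l c)) ` C)"
  have "m \<in> (\<lambda>c. length (lcp l c)) ` C" unfolding m_def using fin ne by (intro Max_in) auto
  then obtain cs where cs: "cs \<in> C" "m = length (lcp l cs)" by auto
  have mx: "length (lcp l c) \<le> length (lcp l cs)" if "c \<in> C" for c
  proof -
    have "length (lcp l c) \<le> m" unfolding m_def using fin that by (intro Max_ge) auto
    then show ?thesis using cs(2) by simp
  qed
  define p where "p = lcp l cs"
  have pl: "prefix p l" and pcs: "prefix p cs" using lcp_prefix[of p l cs] p_def by auto
  have lp: "prefix (lcp l c) p" if "c \<in> C" for c
  proof -
    have "prefix (lcp l c) l" using lcp_prefix[of "lcp l c" l c] by auto
    then show ?thesis using prefix_length_prefix[OF _ pl] mx[OF that] p_def by blast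
  qed
  have "Min ((\<lambda>c. dist_lca t l c ^ z) ` C) = dval t p ^ z"
  proof (rule Min_eqI)
    show "finite ((\<lambda>c. dist_lca t l c ^ z) ` C)" using fin by simp
    show "dval t p ^ z \<in> (\<lambda>c. dist_lca t l c ^ z) ` C" using cs(1) p_def dist_lca_def by auto
    fix y assume "y \<in> (\<lambda>c. dist_lca t l c ^ z) ` C"
    then obtain c where c: "c \<in> C" "y = dval t (lcp l c) ^ z" by (auto simp: dist_lca_def)
    show "dval t p ^ z \<le> y" using W_anti[OF adm l lp[OF c(1)] pl] c(2) by simp
  qed
  moreover have "{u\<in>Nf C. u \<noteq> [] \<and> prefix u l} = {u. prefix u p} - {[]}"
  proof
    show "{u\<in>Nf C. u \<noteq> [] \<and> prefix u l} \<subseteq> {u. prefix u p} - {[]}"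
    proof
      fix u assume "u \<in> {u\<in>Nf C. u \<noteq> [] \<and> prefix u l}"
      then obtain c where c: "c \<in> C" "prefix u c" "u \<noteq> []" "prefix u l" by (auto simp: Nf_def)
      then have "prefix u (lcp l c)" using lcp_prefix by blast
      then have "prefix u p" using lp[OF c(1)] by (rule prefix_order.trans)
      then show "u \<in> {u. prefix u p} - {[]}" using c by auto
    qed
    show "{u. prefix u p} - {[]} \<subseteq> {u\<in>Nf C. u \<noteq> [] \<and> prefix u l}"
      using pl pcs cs(1) by (auto simp: Nf_def intro: prefix_order.trans)
  qed
  ultimately show ?thesis using telescope[of "\<lambda>u. dval t u ^ z" p] by simp
qed

lemma cost_eq:
  assumes adm: "admissible t" and fin: "finite C" and ne: "C \<noteq> {}"
  shows "cost z t C = real (card (leaves t)) * dval t [] ^ z -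
     Ff (\<lambda>u. (dval t (butlast u) ^ z - dval t u ^ z) * real (card {l\<in>leaves t. u \<noteq> [] \<and> prefix u l})) C"
proof -
  define g where "g u = dval t (butlast u) ^ z - dval t u ^ z" for u
  have "cost z t C = (\<Sum>l\<in>leaves t. dval t [] ^ z - (\<Sum>u\<in>{u\<in>Nf C. u \<noteq> [] \<and> prefix u l}. g u))"
    unfolding cost_def g_def by (rule sum.cong) (auto simp: leaf_min[OF adm _ fin ne])
  also have "\<dots> = real (card (leaves t)) * dval t [] ^ z -
      (\<Sum>l\<in>leaves t. \<Sum>u\<in>{u\<in>Nf C. u \<noteq> [] \<and> prefix u l}. g u)"
    by (simp add: sum_subtractf)
  also have "(\<Sum>l\<in>leaves t. \<Sum>u\<in>{u\<in>Nf C. u \<noteq> [] \<and> prefix u l}. g u) =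
      (\<Sum>u\<in>Nf C. \<Sum>l\<in>{l\<in>leaves t. u \<noteq> [] \<and> prefix u l}. g u)"
    by (rule sum.swap_restrict) (auto simp: finite_leaves fin)
  also have "\<dots> = (\<Sum>u\<in>Nf C. g u * real (card {l\<in>leaves t. u \<noteq> [] \<and> prefix u l}))"
    by (simp add: mult.commute)
  finally show ?thesis unfolding Ff_def g_def .
qed

theorem mainTheorem6:
  fixes t :: ltree and z :: nat and c :: "nat \<Rightarrow> nat list"
  assumes adm: "admissible t"
    and zpos: "0 < z"
    and greedy: "\<forall>i\<in>{1..card (leaves t)}.
        c i \<in> leaves t \<and> c i \<notin> c ` {1..<i} \<and>
        (\<forall>x\<in>leaves t - c ` {1..<i}.
           cost z t (insert (c i) (c ` {1..<i})) \<le> cost z t (insert x (c ` {1..<i})))"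
  shows "\<forall>k\<in>{1..card (leaves t)}.
           c ` {1..k} \<subseteq> leaves t \<and> card (c ` {1..k}) = k \<and>
           (\<forall>C. C \<subseteq> leaves t \<and> card C = k \<longrightarrow> cost z t (c ` {1..k}) \<le> cost z t C)"
proof -
  define L where "L = leaves t"
  define n where "n = card L"
  define v where "v u = (dval t (butlast u) ^ z - dval t u ^ z) * real (card {l\<in>leaves t. u \<noteq> [] \<and> prefix u l})" for u
  define K where "K = real (card (leaves t)) * dval t [] ^ z"
  have ce: "cost z t C = K - Ff v C" if "finite C" "C \<noteq> {}" for C
    using cost_eq[OF adm that] unfolding K_def v_def by simp
  have vpos: "\<forall>x\<in>L. \<forall>u. prefix u x \<longrightarrow> 0 \<le> v u"
  proof (intro ballI allI impI)
    fix x u assume x: "x \<in> L" and ux: "prefix u x"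
    show "0 \<le> v u"
    proof (cases "u = []")
      case True then show ?thesis by (simp add: v_def)
    next
      case False
      have "dval t u ^ z \<le> dval t (butlast u) ^ z"
        using W_anti[OF adm _ prefixeq_butlast ux] x L_def by blast
      then show ?thesis unfolding v_def by simp
    qed
  qed
  have gr: "\<forall>i\<in>{1..n}. c i \<in> L \<and> c i \<notin> c ` {1..<i} \<and>
        (\<forall>x\<in>L - c ` {1..<i}. Ff v (insert x (c ` {1..<i})) \<le> Ff v (insert (c i) (c ` {1..<i})))"
  proof
    fix i assume i: "i \<in> {1..n}"
    have g: "c i \<in> L" "c i \<notin> c ` {1..<i}"
      "\<forall>x\<in>L - c ` {1..<i}. cost z t (insert (c i) (c ` {1..<i})) \<le> cost z t (insert x (c ` {1..<i}))"
      using greedy i unfolding L_def n_def by auto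
    have "\<forall>x\<in>L - c ` {1..<i}. Ff v (insert x (c ` {1..<i})) \<le> Ff v (insert (c i) (c ` {1..<i}))"
    proof
      fix x assume "x \<in> L - c ` {1..<i}"
      then have "cost z t (insert (c i) (c ` {1..<i})) \<le> cost z t (insert x (c ` {1..<i}))" using g(3) by blast
      then show "Ff v (insert x (c ` {1..<i})) \<le> Ff v (insert (c i) (c ` {1..<i}))"
        using ce[of "insert (c i) (c ` {1..<i})"] ce[of "insert x (c ` {1..<i})"] by simp
    qed
    then show "c i \<in> L \<and> c i \<notin> c ` {1..<i} \<and>
        (\<forall>x\<in>L - c ` {1..<i}. Ff v (insert x (c ` {1..<i})) \<le> Ff v (insert (c i) (c ` {1..<i})))"
      using g by blast
  qed
  have inj: "inj_on c {1..n}" using inj_greedy[of n c] gr by blast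
  show ?thesis
  proof
    fix k assume k: "k \<in> {1..card (leaves t)}"
    then have kn: "k \<le> n" and k1: "1 \<le> k" unfolding n_def L_def by auto
    have sub: "c ` {1..k} \<subseteq> leaves t" using gr kn unfolding L_def by auto
    have "inj_on c {1..k}" using inj kn by (auto intro: inj_on_subset)
    then have cardk: "card (c ` {1..k}) = k" by (simp add: card_image)
    have "\<forall>C. C \<subseteq> leaves t \<and> card C = k \<longrightarrow> cost z t (c ` {1..k}) \<le> cost z t C"
    proof (intro allI impI)
      fix C assume C: "C \<subseteq> leaves t \<and> card C = k"
      have finC: "finite C" using C k1 card_ge_0_finite[of C] by linarith
      have neC: "C \<noteq> {}" using C k1 by auto
      have neG: "c ` {1..k} \<noteq> {}" using k1 by auto
      have "Ff v C \<le> Ff v (c ` {1..k})"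
        using greedy_opt[OF vpos gr kn k1] C unfolding L_def by blast
      then show "cost z t (c ` {1..k}) \<le> cost z t C"
        using ce[OF finC neC] ce[of "c ` {1..k}"] neG by simp
    qed
    then show "c ` {1..k} \<subseteq> leaves t \<and> card (c ` {1..k}) = k \<and>
           (\<forall>C. C \<subseteq> leaves t \<and> card C = k \<longrightarrow> cost z t (c ` {1..k}) \<le> cost z t C)"
      using sub cardk by blast
  qed
qed

end
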